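(* Let $k_1,k_2$ be constants with $0<k_2\le 1$ and $8k_2^2+6k_1-3<0$. Let $J'=(z_w,z_w')$ be a nonempty open interval, let $r:J'\to\mathbb{R}$ be differentiable, and let $h:J'\to\mathbb{R}$ be differentiable with $\dot h(z)=1+h(z)^2-2r(z)h(z)$ on $J'$, having exactly one zero $z_*\in J'$. Let $G(z)=z-\dfrac{2h(z)}{2+h(z)^2-2r(z)h(z)}$ and $z_{n+1}=G(z_n)$. (1) If $0<r(z)<k_2$ and $\dot r(z)<k_1$ for all $z\in(z_*,z_w')$, then for every $z_0\in(z_*,z_w')$ the iterates are well defined and $(z_n)$ decreases monotonically to $z_*$. (2) If $-k_2<r(z)<0$ and $\dot r(z)<k_1$ for all $z\in(z_w,z_* )$, then for every $z_0\in(z_w,z_* )$ the iterates are well defined and $(z_n)$ increases monotonically to $z_*$.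
   Context: $\dot{}$ denotes differentiation with respect to $z$. Here $h<0$ on $(z_w,z_* )$ and $h>0$ on $(z_*,z_w')$. *)

theory Defs
  imports "HOL-Analysis.Analysis"
begin

definition newton_map :: "(real \<Rightarrow> real) \<Rightarrow> (real \<Rightarrow> real) \<Rightarrow> real \<Rightarrow> real" where
  "newton_map r h z = z - 2 * h z / (2 + (h z)^2 - 2 * r z * h z)"

end

theory Submission
  imports Defs
begin

lemma G_deriv:
  fixes r h :: "real \<Rightarrow> real"
  assumes hd: "(h has_real_derivative (1 + (h x)^2 - 2*r x*h x)) (at x)"
    and rd: "(r has_real_derivative r') (at x)"
    and D: "2 + (h x)^2 - 2*r x*h x \<noteq> 0"
  shows "(newton_map r h has_real_derivative
     ((h x)^2 * (3*(h x)^2 - 8*r x*h x + 4*(r x)^2 + 2 - 4*r') / (2 + (h x)^2 - 2*r x*h x)^2)) (at x)"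
proof -
  define H where "H = h x"
  define R where "R = r x"
  define Hp where "Hp = 1 + H^2 - 2*R*H"
  have hd': "(h has_real_derivative Hp) (at x)" using hd by (simp add: Hp_def H_def R_def)
  have Dd: "((\<lambda>z. 2 + (h z)^2 - 2*r z*h z) has_real_derivative (2*H*Hp - 2*(r'*H + R*Hp))) (at x)"
    unfolding H_def R_def
    by (auto intro!: derivative_eq_intros hd' rd)
  have "((\<lambda>z. z - 2*h z/(2 + (h z)^2 - 2*r z*h z)) has_real_derivative
     (1 - ((2*Hp) * (2 + H^2 - 2*R*H) - 2*H*(2*H*Hp - 2*(r'*H + R*Hp)))/(2 + H^2 - 2*R*H)^2)) (at x)"
    using D unfolding H_def R_def
    apply (intro DERIV_diff DERIV_ident)
    using DERIV_divide[OF DERIV_cmult[OF hd', of 2] Dd] by (simp add: H_def R_def power2_eq_square)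
  moreover have "(1 - ((2*Hp) * (2 + H^2 - 2*R*H) - 2*H*(2*H*Hp - 2*(r'*H + R*Hp)))/(2 + H^2 - 2*R*H)^2)
     = (H^2 * (3*H^2 - 8*R*H + 4*R^2 + 2 - 4*r') / (2 + H^2 - 2*R*H)^2)"
    using D unfolding Hp_def H_def[symmetric] R_def[symmetric]
    by (simp add: field_simps) (simp add: algebra_simps eval_nat_numeral)
  ultimately show ?thesis unfolding newton_map_def[abs_def] H_def R_def by simp
qed


lemma iter_dec:
  fixes G :: "real \<Rightarrow> real"
  assumes step: "\<forall>z\<in>{a<..<c}. a < G z \<and> G z < z"
    and cont: "\<forall>z\<in>{a..<c}. isCont G z"
    and z0: "z0 \<in> {a<..<c}"
  shows "(\<forall>n. (G^^n) z0 \<in> {a<..<c}) \<and> decseq (\<lambda>n. (G^^n) z0) \<and> (\<lambda>n. (G^^n) z0) \<longlonglongrightarrow> a"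
proof -
  define X where "X n = (G^^n) z0" for n
  have XS: "X (Suc n) = G (X n)" for n by (simp add: X_def)
  have mem: "X n \<in> {a<..<c} \<and> X n \<le> z0" for n
  proof (induction n)
    case 0 then show ?case using z0 by (simp add: X_def)
  next
    case (Suc n) then show ?case using step XS[of n] by fastforce
  qed
  have dec: "decseq X"
    by (rule decseq_SucI) (metis XS mem step less_imp_le)
  have lb: "\<forall>i. a \<le> X i" using mem by (simp add: less_imp_le)
  obtain L where L: "X \<longlonglongrightarrow> L" "\<forall>i. L \<le> X i"
    using decseq_convergent[OF dec lb] by blast
  have La: "a \<le> L" by (rule LIMSEQ_le_const[OF L(1)]) (use lb in auto)
  have "L \<le> X 0" using L(2) by blast
  moreover have "X 0 < c" using mem[of 0] by simp
  ultimately have Lc: "L < c" by linarith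
  have "L = a"
  proof (rule ccontr)
    assume "L \<noteq> a"
    then have Lin: "L \<in> {a<..<c}" using La Lc by auto
    have "(\<lambda>n. G (X n)) \<longlonglongrightarrow> G L"
      using isCont_tendsto_compose[OF _ L(1), of G] cont Lin by auto
    moreover have "(\<lambda>n. G (X n)) \<longlonglongrightarrow> L"
      using L(1) LIMSEQ_Suc[OF L(1)] XS by simp
    ultimately have "G L = L" using LIMSEQ_unique by blast
    then show False using step Lin by force
  qed
  then show ?thesis using mem dec L(1) unfolding X_def by auto
qed

lemma iter_inc:
  fixes G :: "real \<Rightarrow> real"
  assumes step: "\<forall>z\<in>{c<..<a}. z < G z \<and> G z < a"
    and cont: "\<forall>z\<in>{c<..a}. isCont G z"
    and z0: "z0 \<in> {c<..<a}"
  shows "(\<forall>n. (G^^n) z0 \<in> {c<..<a}) \<and> incseq (\<lambda>n. (G^^n) z0) \<and> (\<lambda>n. (G^^n) z0) \<longlonglongrightarrow> a"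
proof -
  define X where "X n = (G^^n) z0" for n
  have XS: "X (Suc n) = G (X n)" for n by (simp add: X_def)
  have mem: "X n \<in> {c<..<a} \<and> z0 \<le> X n" for n
  proof (induction n)
    case 0 then show ?case using z0 by (simp add: X_def)
  next
    case (Suc n) then show ?case using step XS[of n] by fastforce
  qed
  have inc: "incseq X"
    by (rule incseq_SucI) (metis XS mem step less_imp_le)
  have lb: "\<forall>i. X i \<le> a" using mem by (simp add: less_imp_le)
  obtain L where L: "X \<longlonglongrightarrow> L" "\<forall>i. X i \<le> L"
    using incseq_convergent[OF inc lb] by blast
  have La: "L \<le> a" by (rule LIMSEQ_le_const2[OF L(1)]) (use lb in auto)
  have "X 0 \<le> L" using L(2) by blast
  moreover have "c < X 0" using mem[of 0] by simp
  ultimately have Lc: "c < L" by linarith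
  have "L = a"
  proof (rule ccontr)
    assume "L \<noteq> a"
    then have Lin: "L \<in> {c<..<a}" using La Lc by auto
    have "(\<lambda>n. G (X n)) \<longlonglongrightarrow> G L"
      using isCont_tendsto_compose[OF _ L(1), of G] cont Lin by auto
    moreover have "(\<lambda>n. G (X n)) \<longlonglongrightarrow> L"
      using L(1) LIMSEQ_Suc[OF L(1)] XS by simp
    ultimately have "G L = L" using LIMSEQ_unique by blast
    then show False using step Lin by force
  qed
  then show ?thesis using mem inc L(1) unfolding X_def by auto
qed

lemma Q_pos:
  fixes k1 k2 H R rp :: real
  assumes "0 < k2" "k2 \<le> 1" "8 * k2^2 + 6 * k1 - 3 < 0" "\<bar>R\<bar> < k2" "rp < k1"
  shows "0 < 3*H^2 - 8*R*H + 4*R^2 + 2 - 4*rp"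
proof -
  have "R^2 < k2^2" using assms by (simp add: abs_less_iff power2_eq_square) (smt (verit) mult_strict_mono' abs_mult_self_eq abs_ge_zero abs_less_iff)
  moreover have "0 \<le> (3*H - 4*R)^2" by simp
  moreover have "3*(3*H^2 - 8*R*H + 4*R^2 + 2 - 4*rp) = (3*H - 4*R)^2 - 4*R^2 + 6 - 12*rp"
    by (simp add: algebra_simps power2_eq_square)
  moreover have "0 \<le> k2^2" by simp
  ultimately have "4*R^2 + 12*rp < 6" using assms by linarith
  then have "0 < (3*H - 4*R)^2 - 4*R^2 + 6 - 12*rp" using \<open>0 \<le> (3*H - 4*R)^2\<close> by linarith
  then have "0 < 3*(3*H^2 - 8*R*H + 4*R^2 + 2 - 4*rp)" using \<open>3*(3*H^2 - 8*R*H + 4*R^2 + 2 - 4*rp) = _\<close> by (simp only:)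
  then show ?thesis by simp
qed

lemma D_pos:
  fixes H R :: real
  assumes "\<bar>R\<bar> < 1"
  shows "0 < 2 + H^2 - 2*R*H"
proof -
  have "R^2 < 1" using assms by (metis abs_less_iff abs_square_less_1)
  moreover have "2 + H^2 - 2*R*H = 1 + (H-R)^2 + (1 - R^2)" by (simp add: algebra_simps power2_eq_square)
  moreover have "0 \<le> (H-R)^2" by simp
  ultimately show ?thesis by linarith
qed

lemma G_cont:
  fixes r h :: "real \<Rightarrow> real"
  assumes "isCont h x" "isCont r x" "2 + (h x)^2 - 2*r x*h x \<noteq> 0"
  shows "isCont (newton_map r h) x"
  unfolding newton_map_def[abs_def] using assms by (intro continuous_intros) auto

lemma G_mono:
  fixes G :: "real \<Rightarrow> real"
  assumes "a < b" "continuous_on {a..b} G"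
    "\<And>x. a < x \<Longrightarrow> x < b \<Longrightarrow> \<exists>d>0. (G has_real_derivative d) (at x)"
  shows "G a < G b"
proof -
  obtain l z where lz: "a < z" "z < b" "DERIV G z :> l" "G b - G a = (b - a) * l"
    using MVT[OF assms(1,2)] assms(3) real_differentiable_def by meson
  obtain d where "d > 0" "DERIV G z :> d" using assms(3) lz by blast
  then have "l = d" using lz DERIV_unique by blast
  then show ?thesis using lz \<open>d>0\<close> assms(1) by (smt (verit) mult_pos_pos)
qed



theorem theorem3p7:
  fixes k1 k2 zw zw' zs :: real and r h :: "real \<Rightarrow> real"
  assumes k2: "0 < k2" "k2 \<le> 1"
    and k12: "8 * k2^2 + 6 * k1 - 3 < 0"
    and J: "zw < zw'"
    and rdiff: "\<forall>z\<in>{zw<..<zw'}. r differentiable (at z)"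
    and hode: "\<forall>z\<in>{zw<..<zw'}. (h has_real_derivative (1 + (h z)^2 - 2 * r z * h z)) (at z)"
    and zs: "zs \<in> {zw<..<zw'}" "h zs = 0"
    and zs_unique: "\<forall>z\<in>{zw<..<zw'}. h z = 0 \<longrightarrow> z = zs"
    and hneg: "\<forall>z\<in>{zw<..<zs}. h z < 0"
    and hpos: "\<forall>z\<in>{zs<..<zw'}. h z > 0"
  shows
    "((\<forall>z\<in>{zs<..<zw'}. 0 < r z \<and> r z < k2 \<and> deriv r z < k1) \<longrightarrow>
       (\<forall>z0\<in>{zs<..<zw'}.
          (\<forall>n. (newton_map r h ^^ n) z0 \<in> {zw<..<zw'} \<and>
               2 + (h ((newton_map r h ^^ n) z0))^2
                 - 2 * r ((newton_map r h ^^ n) z0) * h ((newton_map r h ^^ n) z0) \<noteq> 0)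
          \<and> decseq (\<lambda>n. (newton_map r h ^^ n) z0)
          \<and> (\<lambda>n. (newton_map r h ^^ n) z0) \<longlonglongrightarrow> zs))
     \<and>
     ((\<forall>z\<in>{zw<..<zs}. -k2 < r z \<and> r z < 0 \<and> deriv r z < k1) \<longrightarrow>
       (\<forall>z0\<in>{zw<..<zs}.
          (\<forall>n. (newton_map r h ^^ n) z0 \<in> {zw<..<zw'} \<and>
               2 + (h ((newton_map r h ^^ n) z0))^2
                 - 2 * r ((newton_map r h ^^ n) z0) * h ((newton_map r h ^^ n) z0) \<noteq> 0)
          \<and> incseq (\<lambda>n. (newton_map r h ^^ n) z0)
          \<and> (\<lambda>n. (newton_map r h ^^ n) z0) \<longlonglongrightarrow> zs))"
  proof -
  let ?J = "{zw<..<zw'}"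
  define G where "G = newton_map r h"
  define D where "D z = 2 + (h z)^2 - 2 * r z * h z" for z
  have rder: "(r has_real_derivative deriv r z) (at z)" if "z \<in> ?J" for z
    using rdiff that DERIV_deriv_iff_real_differentiable by blast
  have hcont: "isCont h z" if "z \<in> ?J" for z using hode that DERIV_isCont by blast
  have rcont: "isCont r z" if "z \<in> ?J" for z using rder[OF that] DERIV_isCont by blast
  have Gcont: "isCont G z" if "z \<in> ?J" "D z \<noteq> 0" for z
    unfolding G_def using G_cont[OF hcont[OF that(1)] rcont[OF that(1)]] that(2) D_def by metis
  have Dzs: "D zs = 2" using zs by (simp add: D_def)
  have Gzs: "G zs = zs" using zs by (simp add: G_def newton_map_def)
  have Gdef: "G z = z - 2 * h z / D z" for z by (simp add: G_def D_def newton_map_def)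
  have Gder: "\<exists>d>0. (G has_real_derivative d) (at x)"
    if "x \<in> ?J" "h x \<noteq> 0" "\<bar>r x\<bar> < k2" "deriv r x < k1" for x
  proof -
    have Dx: "0 < D x" using D_pos[of "r x" "h x"] that(3) k2 by (simp add: D_def)
    have Q: "0 < 3*(h x)^2 - 8*r x*h x + 4*(r x)^2 + 2 - 4*deriv r x"
      using Q_pos[OF k2 k12 that(3,4)] by blast
    have "0 < (h x)^2 * (3*(h x)^2 - 8*r x*h x + 4*(r x)^2 + 2 - 4*deriv r x) / (2 + (h x)^2 - 2*r x*h x)^2"
      using Q Dx that(2) by (simp add: D_def)
    moreover have "(G has_real_derivative ((h x)^2 * (3*(h x)^2 - 8*r x*h x + 4*(r x)^2 + 2 - 4*deriv r x) / (2 + (h x)^2 - 2*r x*h x)^2)) (at x)"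
      unfolding G_def using G_deriv[OF _ rder[OF that(1)]] hode that(1) Dx by (simp add: D_def)
    ultimately show ?thesis by blast
  qed
  have part1: "(\<forall>n. (G ^^ n) z0 \<in> ?J \<and> D ((G ^^ n) z0) \<noteq> 0) \<and> decseq (\<lambda>n. (G ^^ n) z0) \<and> (\<lambda>n. (G ^^ n) z0) \<longlonglongrightarrow> zs"
    if A: "\<forall>z\<in>{zs<..<zw'}. 0 < r z \<and> r z < k2 \<and> deriv r z < k1" and z0: "z0 \<in> {zs<..<zw'}" for z0
  proof -
    have D1: "0 < D z" if "z \<in> {zs<..<zw'}" for z
    proof -
      have "\<bar>r z\<bar> < 1" using A that k2 by fastforce
      then show ?thesis using D_pos[of "r z" "h z"] by (simp add: D_def)
    qed
    have cont1: "\<forall>z\<in>{zs..<zw'}. isCont G z"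
    proof
      fix z assume z: "z \<in> {zs..<zw'}"
      show "isCont G z"
      proof (cases "z = zs")
        case True then show ?thesis using Gcont[of zs] zs Dzs by simp
      next
        case False then show ?thesis using Gcont[of z] D1[of z] z zs by force
      qed
    qed
    have step: "\<forall>z\<in>{zs<..<zw'}. zs < G z \<and> G z < z"
    proof
      fix z assume z: "z \<in> {zs<..<zw'}"
      have "0 < 2 * h z / D z" using hpos z D1[OF z] by simp
      then have "G z < z" unfolding Gdef by linarith
      moreover have "G zs < G z"
      proof (rule G_mono[where G=G])
        show "zs < z" using z by simp
        show "continuous_on {zs..z} G"
          using cont1 z by (intro continuous_at_imp_continuous_on) auto
        fix x assume x: "zs < x" "x < z"
        have xi: "x \<in> {zs<..<zw'}" using x z by auto
        have xJ: "x \<in> ?J" using xi zs by auto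
        have "0 < h x" using hpos xi by blast
        then have hx: "h x \<noteq> 0" by simp
        have Ar: "-k2 < r x \<and> r x < k2" "deriv r x < k1" using A xi by force+
        have Ax: "\<bar>r x\<bar> < k2" "deriv r x < k1" using Ar by (simp_all add: abs_less_iff)
        show "\<exists>d>0. (G has_real_derivative d) (at x)"
          by (rule Gder[OF xJ hx Ax])
      qed
      ultimately show "zs < G z \<and> G z < z" using Gzs by simp
    qed
    have it: "(\<forall>n. (G^^n) z0 \<in> {zs<..<zw'}) \<and> decseq (\<lambda>n. (G^^n) z0) \<and> (\<lambda>n. (G^^n) z0) \<longlonglongrightarrow> zs"
      using iter_dec[OF step cont1 z0] .
    have "(G ^^ n) z0 \<in> ?J \<and> D ((G ^^ n) z0) \<noteq> 0" for n
    proof -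
      have m: "(G ^^ n) z0 \<in> {zs<..<zw'}" using it by blast
      then have "0 < D ((G ^^ n) z0)" by (rule D1)
      then show ?thesis using m zs by auto
    qed
    then show ?thesis using it by blast
  qed
  have part2: "(\<forall>n. (G ^^ n) z0 \<in> ?J \<and> D ((G ^^ n) z0) \<noteq> 0) \<and> incseq (\<lambda>n. (G ^^ n) z0) \<and> (\<lambda>n. (G ^^ n) z0) \<longlonglongrightarrow> zs"
    if A: "\<forall>z\<in>{zw<..<zs}. -k2 < r z \<and> r z < 0 \<and> deriv r z < k1" and z0: "z0 \<in> {zw<..<zs}" for z0
  proof -
    have D1: "0 < D z" if "z \<in> {zw<..<zs}" for z
    proof -
      have "\<bar>r z\<bar> < 1" using A that k2 by fastforce
      then show ?thesis using D_pos[of "r z" "h z"] by (simp add: D_def)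
    qed
    have cont1: "\<forall>z\<in>{zw<..zs}. isCont G z"
    proof
      fix z assume z: "z \<in> {zw<..zs}"
      show "isCont G z"
      proof (cases "z = zs")
        case True then show ?thesis using Gcont[of zs] zs Dzs by simp
      next
        case False then show ?thesis using Gcont[of z] D1[of z] z zs by force
      qed
    qed
    have step: "\<forall>z\<in>{zw<..<zs}. z < G z \<and> G z < zs"
    proof
      fix z assume z: "z \<in> {zw<..<zs}"
      have "2 * h z / D z < 0" using hneg z D1[OF z] by (simp add: divide_neg_pos)
      then have "z < G z" unfolding Gdef by linarith
      moreover have "G z < G zs"
      proof (rule G_mono[where G=G])
        show "z < zs" using z by simp
        show "continuous_on {z..zs} G"
          using cont1 z by (intro continuous_at_imp_continuous_on) auto
        fix x assume x: "z < x" "x < zs"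
        have xi: "x \<in> {zw<..<zs}" using x z by auto
        have xJ: "x \<in> ?J" using xi zs by auto
        have "h x < 0" using hneg xi by blast
        then have hx: "h x \<noteq> 0" by simp
        have Ar: "-k2 < r x \<and> r x < k2" "deriv r x < k1" using A xi by force+
        have Ax: "\<bar>r x\<bar> < k2" "deriv r x < k1" using Ar by (simp_all add: abs_less_iff)
        show "\<exists>d>0. (G has_real_derivative d) (at x)"
          by (rule Gder[OF xJ hx Ax])
      qed
      ultimately show "z < G z \<and> G z < zs" using Gzs by simp
    qed
    have it: "(\<forall>n. (G^^n) z0 \<in> {zw<..<zs}) \<and> incseq (\<lambda>n. (G^^n) z0) \<and> (\<lambda>n. (G^^n) z0) \<longlonglongrightarrow> zs"
      using iter_inc[OF step cont1 z0] .
    have "(G ^^ n) z0 \<in> ?J \<and> D ((G ^^ n) z0) \<noteq> 0" for n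
    proof -
      have m: "(G ^^ n) z0 \<in> {zw<..<zs}" using it by blast
      then have "0 < D ((G ^^ n) z0)" by (rule D1)
      then show ?thesis using m zs by auto
    qed
    then show ?thesis using it by blast
  qed
  show ?thesis
    using part1 part2 unfolding G_def D_def by blast
qed

end
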